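(* Let $c\in\mathbb{C}(t)\setminus\{0,1,t\}$ and $F_n$, $P_1$ as in the context. Write $F_n(1,t)=(A_n+O(t),\;t(B_n+O(t)))$ as polynomials in $t$, i.e. $A_n$ is the constant term of the first coordinate of $F_n(1,t)$ and $B_n$ is the coefficient of $t$ in the second coordinate (whose constant term vanishes). Then $A_n=P_1(1,0)^{4^{n-1}}$ for all $n\ge1$, and $\limsup_{n\to\infty}|B_n|^{1/4^{n-1}}\le|P_1(1,0)|$.
   Context: $F_{t_1,t_2}(z,w)=\big((t_1w^2-t_2z^2)^2,\;4t_2zw(w-z)(t_1w-t_2z)\big)$. $C=(c_1,c_2)$ is a pair of coprime homogeneous polynomials in $(t_1,t_2)$ of equal degree with $c(t)=c_1(t,1)/c_2(t,1)$. $F_1=F_{t_1,t_2}(C)/\gcd(F_{t_1,t_2}(C))=(P_1,Q_1)$ (dividing by the gcd of the two coordinates), and $F_{n+1}=F_{t_1,t_2}(F_n)/t_2^2$ (substituting the coordinates of $F_n$ for $(z,w)$); these are pairs of homogeneous polynomials in $(t_1,t_2)$, and $Q_1(1,0)=0$. *)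

theory Defs
  imports "HOL-Computational_Algebra.Computational_Algebra" "HOL-Computational_Algebra.Field_as_Ring"
          "HOL-Library.Extended_Real" "HOL-Library.Liminf_Limsup"
begin

text \<open>Polynomials in two variables (t1,t2) are represented as complex poly poly:
 the inner variable is t1, the outer variable is t2.\<close>

type_synonym bpoly = "complex poly poly"

definition T1 :: bpoly where "T1 = [:[:0, 1:]:]"
definition T2 :: bpoly where "T2 = [:0, 1:]"

definition ev2 :: "bpoly \<Rightarrow> complex \<Rightarrow> complex \<Rightarrow> complex" where
  "ev2 P a b = poly (poly P [:b:]) a"

definition homogeneous :: "bpoly \<Rightarrow> nat \<Rightarrow> bool" where
  "homogeneous P d \<longleftrightarrow> (\<forall>i j. coeff (coeff P j) i \<noteq> 0 \<longrightarrow> i + j = d)"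

text \<open>P(t,1) as a univariate polynomial in t.\<close>
definition dehom2 :: "bpoly \<Rightarrow> complex poly" where
  "dehom2 P = poly P 1"

text \<open>P(1,t) as a univariate polynomial in t.\<close>
definition dehom1 :: "bpoly \<Rightarrow> complex poly" where
  "dehom1 P = map_poly (\<lambda>q. poly q 1) P"

definition FF :: "bpoly \<Rightarrow> bpoly \<Rightarrow> bpoly \<times> bpoly" where
  "FF z w = ((T1 * w^2 - T2 * z^2)^2, 4 * T2 * z * w * (w - z) * (T1 * w - T2 * z))"

definition F1 :: "bpoly \<Rightarrow> bpoly \<Rightarrow> bpoly \<times> bpoly" where
  "F1 c1 c2 = (let (x, y) = FF c1 c2; g = gcd x y in (x div g, y div g))"

text \<open>Fiter c1 c2 k = F_{k+1}.\<close>
fun Fiter :: "bpoly \<Rightarrow> bpoly \<Rightarrow> nat \<Rightarrow> bpoly \<times> bpoly" where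
  "Fiter c1 c2 0 = F1 c1 c2"
| "Fiter c1 c2 (Suc k) =
     (let (p, q) = Fiter c1 c2 k; (x, y) = FF p q in (x div T2^2, y div T2^2))"

end

theory Submission
  imports Defs "HOL-Analysis.Extended_Real_Limits"
begin


lemma dehom1_add: "dehom1 (p + q) = dehom1 p + dehom1 q"
  by (rule poly_eqI) (simp add: dehom1_def coeff_map_poly)
lemma dehom1_diff: "dehom1 (p - q) = dehom1 p - dehom1 q"
  by (rule poly_eqI) (simp add: dehom1_def coeff_map_poly)
lemma dehom1_pCons: "dehom1 (pCons a p) = pCons (poly a 1) (dehom1 p)"
  by (simp add: dehom1_def map_poly_pCons)
lemma dehom1_smult: "dehom1 (smult a p) = smult (poly a 1) (dehom1 p)"
  by (simp add: dehom1_def map_poly_smult)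
lemma dehom1_0[simp]: "dehom1 0 = 0"
  by (simp add: dehom1_def)
lemma dehom1_mult: "dehom1 (p * q) = dehom1 p * dehom1 q"
  by (induction p) (simp_all add: dehom1_pCons dehom1_smult dehom1_add)
lemma dehom1_power: "dehom1 (p ^ n) = dehom1 p ^ n"
  by (induction n) (simp_all add: dehom1_mult, simp add: dehom1_def)
lemma dehom1_4: "dehom1 4 = 4"
  by (simp add: numeral_poly dehom1_pCons)
lemma dehom1_T1: "dehom1 T1 = 1"
  by (simp add: T1_def dehom1_pCons)
lemma dehom1_T2: "dehom1 T2 = [:0,1:]"
  by (simp add: dehom1_def T2_def map_poly_pCons)

lemmas dehom1_simps = dehom1_add dehom1_diff dehom1_mult dehom1_power dehom1_4 dehom1_T1 dehom1_T2

lemma T2_dvd_iff: "T2 dvd p \<longleftrightarrow> poly p 0 = 0"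
  using dvd_iff_poly_eq_0[of 0 p] by (simp add: T2_def)

lemma FF_step:
  assumes "q = T2 * q'"
  shows "fst (FF p q) div T2^2 = (T1*T2*q'^2 - p^2)^2"
    and "snd (FF p q) div T2^2 = T2 * (4*p*q'*(T2*q'-p)*(T1*q'-p))"
proof -
  have T2: "T2 \<noteq> 0" by (simp add: T2_def)
  have "fst (FF p q) = T2^2 * (T1*T2*q'^2 - p^2)^2"
    by (simp add: FF_def assms algebra_simps power2_eq_square)
  then show "fst (FF p q) div T2^2 = (T1*T2*q'^2 - p^2)^2" using T2 by simp
  have "snd (FF p q) = T2^2 * (T2 * (4*p*q'*(T2*q'-p)*(T1*q'-p)))"
    by (simp add: FF_def assms algebra_simps power2_eq_square)
  then show "snd (FF p q) div T2^2 = T2 * (4*p*q'*(T2*q'-p)*(T1*q'-p))" using T2 by simp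
qed



lemma ord_ge: fixes Y :: bpoly assumes "T2^m dvd Y" "Y \<noteq> 0" shows "m \<le> order 0 Y"
proof (rule ccontr)
  assume "\<not> m \<le> order 0 Y"
  then have "T2^Suc (order 0 Y) dvd T2^m" by (intro le_imp_power_dvd) simp
  with assms(1) have "T2^Suc (order 0 Y) dvd Y" using dvd_trans by blast
  with order_2[OF assms(2), of 0] show False by (simp add: T2_def)
qed

lemma ord_lt: fixes X :: bpoly assumes "\<not> T2^m dvd X" shows "order 0 X < m"
proof (rule ccontr)
  assume "\<not> order 0 X < m"
  then have "T2^m dvd T2^(order 0 X)" by (simp add: le_imp_power_dvd)
  moreover have "T2^(order 0 X) dvd X" using order_1[of 0 X] by (simp add: T2_def)
  ultimately show False using assms dvd_trans by blast
qed

lemma quotient_root: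
  fixes X Y :: bpoly
  assumes X: "X \<noteq> 0" and m: "T2^m dvd Y" "\<not> T2^m dvd X"
  shows "poly (Y div gcd X Y) 0 = 0"
proof (cases "Y div gcd X Y = 0")
  case True then show ?thesis by simp
next
  case False
  define g where "g = gcd X Y"
  have gY: "Y = (Y div g) * g" by (simp add: g_def)
  have gne: "g \<noteq> 0" using X by (simp add: g_def)
  have Y: "Y \<noteq> 0" using False by (auto simp: g_def)
  obtain h where Xh: "X = g * h" by (metis g_def gcd_dvd1 dvdE)
  have "order 0 X = order 0 g + order 0 h" using X Xh order_mult by metis
  moreover have "order 0 Y = order 0 (Y div g) + order 0 g" using Y gY order_mult by metis
  moreover have "m \<le> order 0 Y" using ord_ge m Y by blast
  moreover have "order 0 X < m" using ord_lt m by blast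
  ultimately have "order 0 (Y div g) \<noteq> 0" by linarith
  then show ?thesis using order_root g_def by blast
qed



lemma T2_not_unit: "\<not> is_unit T2"
  by (auto simp: T2_def is_unit_poly_iff)

lemma Q1_root:
  assumes cop: "coprime c1 c2" and fr: "Fract (dehom2 c1) (dehom2 c2) \<noteq> 0"
  shows "poly (snd (F1 c1 c2)) 0 = 0"
proof -
  define X where "X = fst (FF c1 c2)"
  define Y where "Y = snd (FF c1 c2)"
  have F1: "snd (F1 c1 c2) = Y div gcd X Y"
    by (simp add: F1_def X_def Y_def Let_def split: prod.split)
  have u2: "dehom2 c2 \<noteq> 0"
  proof
    assume "dehom2 c2 = 0"
    then have "Fract (dehom2 c1) (dehom2 c2) = 0" by (simp add: eq_fract(2) Zero_fract_def)
    with fr show False by simp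
  qed
  have X: "X \<noteq> 0"
  proof
    assume "X = 0"
    then have "T1*c2^2 = T2*c1^2" by (simp add: X_def FF_def)
    then have "poly (T1*c2^2) 1 = poly (T2*c1^2) 1" by simp
    then have e: "[:0,1:] * dehom2 c2 ^ 2 = dehom2 c1 ^ 2"
      by (simp add: T1_def T2_def dehom2_def)
    then have "degree ([:0,1:] * dehom2 c2 ^ 2) = degree (dehom2 c1 ^ 2)" by simp
    moreover have "degree ([:0,1:] * dehom2 c2 ^ 2) = 1 + 2 * degree (dehom2 c2)"
      using u2 by (simp add: degree_mult_eq degree_power_eq)
    moreover have "dehom2 c1 \<noteq> 0" using e u2 by auto
    then have "degree (dehom2 c1 ^ 2) = 2 * degree (dehom2 c1)"
      by (simp add: degree_power_eq)
    ultimately show False by presburger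
  qed
  have "\<exists>m. T2^m dvd Y \<and> \<not> T2^m dvd X"
  proof (cases "poly c2 0 = 0")
    case False
    have "T2^1 dvd Y"
      by (simp add: Y_def FF_def)
    moreover have "\<not> T2^1 dvd X"
      using False unfolding power_one_right T2_dvd_iff by (simp add: X_def FF_def T1_def T2_def)
    ultimately show ?thesis by blast
  next
    case True
    then obtain c2' where c2: "c2 = T2 * c2'" using T2_dvd_iff by blast
    have c1: "poly c1 0 \<noteq> 0"
    proof
      assume "poly c1 0 = 0"
      then have "T2 dvd c1" using T2_dvd_iff by blast
      moreover have "T2 dvd c2" using c2 by simp
      ultimately have "is_unit T2" using cop coprime_common_divisor by blast
      with T2_not_unit show False by blast
    qed
    have "Y = T2^3 * (4*c1*c2'*(c2-c1)*(T1*c2'-c1))"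
      by (simp add: Y_def FF_def c2 algebra_simps power3_eq_cube)
    then have "T2^3 dvd Y" by simp
    moreover have "\<not> T2^3 dvd X"
    proof
      assume a: "T2^3 dvd X"
      have "X = T2^2 * (T1*T2*c2'^2 - c1^2)^2"
        by (simp add: X_def FF_def c2 algebra_simps power2_eq_square)
      moreover have "T2^3 = T2^2 * T2" by (simp add: power3_eq_cube power2_eq_square)
      ultimately have "T2^2 * T2 dvd T2^2 * (T1*T2*c2'^2 - c1^2)^2" using a by simp
      moreover have "T2^2 \<noteq> 0" by (simp add: T2_def)
      ultimately have "T2 dvd (T1*T2*c2'^2 - c1^2)^2"
        using dvd_times_left_cancel_iff by blast
      then show False using c1 unfolding T2_dvd_iff by (simp add: T2_def)
    qed
    ultimately show ?thesis by blast
  qed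
  then obtain m where "T2^m dvd Y" "\<not> T2^m dvd X" by blast
  with X F1 show ?thesis using quotient_root by simp
qed



lemma Fiter_Suc': "Fiter c1 c2 (Suc k) =
  (fst (FF (fst (Fiter c1 c2 k)) (snd (Fiter c1 c2 k))) div T2^2,
   snd (FF (fst (Fiter c1 c2 k)) (snd (Fiter c1 c2 k))) div T2^2)"
  by (simp add: Let_def split: prod.split)

lemma Fiter_root:
  assumes "poly (snd (F1 c1 c2)) 0 = 0"
  shows "poly (snd (Fiter c1 c2 k)) 0 = 0"
proof (induction k)
  case 0 then show ?case using assms by simp
next
  case (Suc k)
  then obtain q' where q: "snd (Fiter c1 c2 k) = T2 * q'" using T2_dvd_iff by blast
  show ?case unfolding Fiter_Suc' snd_conv FF_step(2)[OF q] by (simp add: T2_def)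
qed

lemma coeff1_X: "coeff ([:0,1:] * (r::complex poly)) (Suc 0) = coeff r 0"
  by simp

lemma Fiter_rec:
  assumes "poly (snd (Fiter c1 c2 k)) 0 = 0"
  defines "a \<equiv> \<lambda>k. coeff (dehom1 (fst (Fiter c1 c2 k))) 0"
    and "b \<equiv> \<lambda>k. coeff (dehom1 (snd (Fiter c1 c2 k))) 1"
  shows "a (Suc k) = a k ^ 4" and "b (Suc k) = 4 * a k ^ 2 * b k * (a k - b k)"
proof -
  obtain q' where q: "snd (Fiter c1 c2 k) = T2 * q'" using assms T2_dvd_iff by blast
  define u where "u = dehom1 (fst (Fiter c1 c2 k))"
  define w where "w = dehom1 q'"
  have ak: "a k = poly u 0" by (simp add: a_def u_def poly_0_coeff_0)
  have bk: "b k = poly w 0" by (simp add: b_def q dehom1_simps w_def poly_0_coeff_0)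
  have "a (Suc k) = poly (([:0,1:] * w^2 - u^2)^2) 0"
    unfolding a_def Fiter_Suc' fst_conv FF_step(1)[OF q]
    by (simp add: dehom1_simps u_def w_def poly_0_coeff_0)
  then show "a (Suc k) = a k ^ 4" by (simp add: ak)
  have "b (Suc k) = poly (4 * u * w * ([:0,1:] * w - u) * (w - u)) 0"
    unfolding b_def Fiter_Suc' snd_conv FF_step(2)[OF q]
    by (simp add: dehom1_simps u_def w_def poly_0_coeff_0 coeff1_X del: mult_pCons_left)
  then show "b (Suc k) = 4 * a k ^ 2 * b k * (a k - b k)" by (simp add: ak bk algebra_simps power2_eq_square)
qed



lemma bound_step:
  fixes al be al' be' L :: real
  assumes "0 \<le> al" "0 \<le> be" "1 \<le> L" "be \<le> al * L"
    and "be' \<le> 4 * al^2 * be * (al + be)"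
  shows "be' \<le> 8 * al^4 * L^2"
proof -
  have "4 * al^2 * be * (al + be) \<le> 4 * al^2 * (al*L) * (al + al*L)"
    using assms by (intro mult_mono add_mono) (auto intro!: mult_nonneg_nonneg)
  also have "\<dots> = 4 * al^4 * L * (1 + L)" by (simp add: algebra_simps power2_eq_square power4_eq_xxxx)
  also have "\<dots> \<le> 4 * al^4 * L * (L + L)"
    using assms by (intro mult_left_mono) auto
  also have "\<dots> = 8 * al^4 * L^2" by (simp add: algebra_simps power2_eq_square)
  finally show ?thesis using assms by linarith
qed

lemma limsup_bound:
  fixes a b :: "nat \<Rightarrow> complex"
  assumes ra: "\<And>k. a (Suc k) = a k ^ 4"
    and rb: "\<And>k. b (Suc k) = 4 * a k^2 * b k * (a k - b k)"
  shows "limsup (\<lambda>n. ereal (norm (b n) powr (1/4^n))) \<le> ereal (norm (a 0))"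
proof -
  define al where "al = norm (a 0)"
  have na: "norm (a k) = al ^ (4^k)" for k
    by (induction k) (simp_all add: ra al_def norm_power power_mult[symmetric] mult.commute)
  have nb: "norm (b (Suc k)) \<le> 4 * norm (a k)^2 * norm (b k) * (norm (a k) + norm (b k))" for k
  proof -
    have "norm (b (Suc k)) = 4 * norm (a k)^2 * norm (b k) * norm (a k - b k)"
      by (simp add: rb norm_mult norm_power)
    also have "\<dots> \<le> 4 * norm (a k)^2 * norm (b k) * (norm (a k) + norm (b k))"
      by (intro mult_left_mono norm_triangle_ineq4) auto
    finally show ?thesis .
  qed
  show ?thesis
  proof (cases "al = 0")
    case True
    have "eventually (\<lambda>n. ereal (norm (b n) powr (1/4^n)) \<le> ereal (norm (a 0))) sequentially"
    proof (rule eventually_sequentiallyI[of 1])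
      fix n :: nat assume "1 \<le> n"
      then obtain k where n: "n = Suc k" by (cases n) auto
      have "(0::real) ^ (4^k) = 0" by (rule zero_power) simp
      then have "norm (a k) = 0" using na[of k] True by simp
      then have "norm (b n) \<le> 0" using nb[of k] by (simp add: n)
      then show "ereal (norm (b n) powr (1/4^n)) \<le> ereal (norm (a 0))" by simp
    qed
    then show ?thesis by (rule Limsup_bounded)
  next
    case False
    then have alp: "al > 0" by (simp add: al_def)
    define M where "M = 8 + 8 * norm (b 0) / al"
    have M8: "M \<ge> 8" using alp by (simp add: M_def)
    have bnd: "norm (b k) \<le> norm (a k) * (M^(2^k) / 8)" for k
    proof (induction k)
      case 0
      have "norm (a 0) * (M^(2^0) / 8) = al * (M/8)" by (simp add: al_def)
      also have "M/8 = 1 + norm (b 0) / al" unfolding M_def by (simp add: add_divide_distrib)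
      also have "al * (1 + norm (b 0) / al) = al + norm (b 0)" using alp by (simp add: distrib_left)
      finally have e: "norm (a 0) * (M^(2^0) / 8) = al + norm (b 0)" .
      show ?case unfolding e using alp by simp
    next
      case (Suc k)
      have L1: "1 \<le> M^(2^k) / 8"
      proof -
        have "M \<le> M^(2^k)" using M8 by (intro self_le_power) auto
        then show ?thesis using M8 by simp
      qed
      have "norm (b (Suc k)) \<le> 8 * norm (a k)^4 * (M^(2^k) / 8)^2"
        using bound_step[OF _ _ L1 Suc nb[of k]] by simp
      also have "\<dots> = norm (a (Suc k)) * (M^(2^Suc k) / 8)"
        proof -
          define X where "X = M^(2^k)"
          have "M^(2^Suc k) = X^2" unfolding X_def by (metis power_Suc power_mult mult.commute)
          moreover have "norm (a (Suc k)) = norm (a k)^4" by (simp add: ra norm_power)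
          ultimately show ?thesis unfolding X_def[symmetric]
            by (simp add: power_divide power2_eq_square)
        qed
      finally show ?case .
    qed
    define g where "g k = al * M powr ((1/2)^k)" for k
    have le: "norm (b k) powr (1/4^k) \<le> g k" for k
    proof -
      have "norm (b k) powr (1/4^k) \<le> (norm (a k) * M^(2^k)) powr (1/4^k)"
      proof (rule powr_mono2)
        have "0 \<le> norm (a k) * M^(2^k)" using M8 by simp
        then show "norm (b k) \<le> norm (a k) * M^(2^k)" using bnd[of k] by simp
      qed auto
      also have "\<dots> = (al powr (4^k) * M powr (2^k)) powr (1/4^k)"
        using alp M8 by (simp add: na powr_realpow[symmetric])
      also have "\<dots> = (al powr (4^k)) powr (1/4^k) * (M powr (2^k)) powr (1/4^k)"
        using alp M8 by (intro powr_mult)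
      also have "\<dots> = al powr (4^k * (1/4^k)) * M powr (2^k * (1/4^k))"
        by (simp only: powr_powr)
      also have "(4::real)^k * (1/4^k) = 1" by simp
      also have "(2::real)^k * (1/4^k) = (1/2)^k"
      proof -
        have "(4::real)^k = 2^k * 2^k" by (simp add: power_mult_distrib[symmetric])
        then show ?thesis by (simp add: power_one_over)
      qed
      also have "al powr 1 = al" using alp by simp
      finally show ?thesis by (simp add: g_def)
    qed
    have "(g \<longlongrightarrow> al * M powr 0) sequentially"
      unfolding g_def using M8
      by (intro tendsto_mult tendsto_const tendsto_powr LIMSEQ_realpow_zero) auto
    then have lim: "((\<lambda>k. ereal (g k)) \<longlongrightarrow> ereal al) sequentially"
      using M8 by (intro tendsto_ereal) simp
    have "limsup (\<lambda>n. ereal (norm (b n) powr (1/4^n))) \<le> limsup (\<lambda>k. ereal (g k))"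
      using le by (intro Limsup_mono always_eventually) simp
    also have "\<dots> = ereal al" using lim by (intro lim_imp_Limsup) auto
    finally show ?thesis by (simp add: al_def)
  qed
qed


theorem lemma4p2:
  fixes c1 c2 :: bpoly and d :: nat
  assumes "homogeneous c1 d" and "homogeneous c2 d"
    and "coprime c1 c2" and "c2 \<noteq> 0"
    and "Fract (dehom2 c1) (dehom2 c2) \<notin> {0, 1, Fract [:0, 1:] 1}"
  defines "P1 \<equiv> fst (F1 c1 c2)"
    and "A \<equiv> (\<lambda>n. coeff (dehom1 (fst (Fiter c1 c2 (n - 1)))) 0)"
    and "B \<equiv> (\<lambda>n. coeff (dehom1 (snd (Fiter c1 c2 (n - 1)))) 1)"
  shows "(\<forall>n\<ge>1. A n = ev2 P1 1 0 ^ (4 ^ (n - 1)))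
    \<and> limsup (\<lambda>n. ereal (norm (B n) powr (1 / 4 ^ (n - 1)))) \<le> ereal (norm (ev2 P1 1 0))"
proof -
  define a where "a = (\<lambda>k. coeff (dehom1 (fst (Fiter c1 c2 k))) 0)"
  define b where "b = (\<lambda>k. coeff (dehom1 (snd (Fiter c1 c2 k))) 1)"
  have fr: "Fract (dehom2 c1) (dehom2 c2) \<noteq> 0" using assms(5) by blast
  have r0: "poly (snd (F1 c1 c2)) 0 = 0" by (rule Q1_root[OF assms(3) fr])
  have rk: "poly (snd (Fiter c1 c2 k)) 0 = 0" for k by (rule Fiter_root[OF r0])
  have ra: "a (Suc k) = a k ^ 4" for k unfolding a_def by (rule Fiter_rec(1)[OF rk])
  have rb: "b (Suc k) = 4 * a k ^ 2 * b k * (a k - b k)" for k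
    unfolding a_def b_def by (rule Fiter_rec(2)[OF rk])
  have a0: "a 0 = ev2 P1 1 0"
    by (simp add: a_def P1_def ev2_def dehom1_def coeff_map_poly poly_0_coeff_0)
  have ak: "a k = a 0 ^ (4^k)" for k
    by (induction k) (simp_all add: ra power_mult[symmetric] mult.commute)
  have part1: "\<forall>n\<ge>1. A n = ev2 P1 1 0 ^ (4 ^ (n - 1))"
    using ak a0 by (simp add: A_def a_def)
  have "limsup (\<lambda>n. ereal (norm (B n) powr (1 / 4 ^ (n - 1))))
      = limsup (\<lambda>n. ereal (norm (B (n+1)) powr (1 / 4 ^ (n + 1 - 1))))"
    by (rule limsup_shift[symmetric])
  also have "\<dots> = limsup (\<lambda>n. ereal (norm (b n) powr (1 / 4 ^ n)))"
    by (simp add: B_def b_def)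
  also have "\<dots> \<le> ereal (norm (a 0))" using ra rb by (rule limsup_bound[of a b])
  finally show ?thesis using part1 a0 by simp
qed

end
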